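(* Let $C_{\max}>0$ and let $a\in C^1(\overline\Omega)$ satisfy $\{a>0\}\ne\emptyset$. There exists a constant $\kappa_0>0$ such that, if $\kappa\ge\kappa_0$ and $0\le H\le C_{\max}\kappa^{-1}$, then $\mu_1(\kappa,H)<0$.
   Context: $\Omega\subset\mathbb R^2$ is a bounded, open, simply connected set with smooth boundary, $\nu$ the unit interior normal, $B_0\in C^\infty(\overline\Omega)$ real, $\mathbf F\in H^1(\Omega;\mathbb R^2)$ the unique field with $\operatorname{div}\mathbf F=0$, $\mathbf F\cdot\nu|_{\partial\Omega}=0$, $\operatorname{curl}\mathbf F=B_0$. $\mu_1(\kappa,H)=\inf_{\phi\in H^1(\Omega)\setminus\{0\}}\frac{\int_\Omega(|(\nabla-i\kappa H\mathbf F)\phi|^2-\kappa^2a(x)|\phi|^2)dx}{\|\phi\|^2_{L^2(\Omega)}}$. *)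

theory Defs
  imports "HOL-Analysis.Analysis"
begin

definition pd :: "(real^2 \<Rightarrow> real) \<Rightarrow> 2 \<Rightarrow> real^2 \<Rightarrow> real" where
  "pd f i x = frechet_derivative f (at x) (axis i 1)"

fun Ck :: "nat \<Rightarrow> (real^2 \<Rightarrow> real) \<Rightarrow> bool" where
  "Ck 0 f = continuous_on UNIV f"
| "Ck (Suc k) f = ((\<forall>x. f differentiable (at x)) \<and> (\<forall>i. Ck k (pd f i)))"

definition smooth :: "(real^2 \<Rightarrow> real) \<Rightarrow> bool" where
  "smooth f = (\<forall>k. Ck k f)"

definition C1_closure :: "(real^2) set \<Rightarrow> (real^2 \<Rightarrow> real) \<Rightarrow> bool" where
  "C1_closure \<Omega> f = (\<exists>g. Ck 1 g \<and> (\<forall>x\<in>closure \<Omega>. f x = g x))"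

definition Cinf_closure :: "(real^2) set \<Rightarrow> (real^2 \<Rightarrow> real) \<Rightarrow> bool" where
  "Cinf_closure \<Omega> f = (\<exists>g. smooth g \<and> (\<forall>x\<in>closure \<Omega>. f x = g x))"

definition smooth_boundary :: "(real^2) set \<Rightarrow> bool" where
  "smooth_boundary \<Omega> = (\<exists>\<rho>. smooth \<rho> \<and> \<Omega> = {x. \<rho> x < 0} \<and>
        (\<forall>x. \<rho> x = 0 \<longrightarrow> (\<exists>i. pd \<rho> i x \<noteq> 0)))"

definition test_fun :: "(real^2) set \<Rightarrow> (real^2 \<Rightarrow> real) \<Rightarrow> bool" where
  "test_fun \<Omega> \<psi> = (smooth \<psi> \<and> (\<exists>K. compact K \<and> K \<subseteq> \<Omega> \<and> (\<forall>x. x \<notin> K \<longrightarrow> \<psi> x = 0)))"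

definition L2 :: "(real^2) set \<Rightarrow> (real^2 \<Rightarrow> 'b::{banach,second_countable_topology}) \<Rightarrow> bool" where
  "L2 \<Omega> f = (f \<in> borel_measurable (lebesgue_on \<Omega>) \<and>
              integrable (lebesgue_on \<Omega>) (\<lambda>x. (norm (f x))\<^sup>2))"

definition weak_deriv :: "(real^2) set \<Rightarrow> (real^2 \<Rightarrow> 'b::{banach,second_countable_topology}) \<Rightarrow> 2 \<Rightarrow> (real^2 \<Rightarrow> 'b) \<Rightarrow> bool" where
  "weak_deriv \<Omega> f i g = (\<forall>\<psi>. test_fun \<Omega> \<psi> \<longrightarrow>
      integral\<^sup>L (lebesgue_on \<Omega>) (\<lambda>x. pd \<psi> i x *\<^sub>R f x)
        = - integral\<^sup>L (lebesgue_on \<Omega>) (\<lambda>x. \<psi> x *\<^sub>R g x))"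

definition H1 :: "(real^2) set \<Rightarrow> (real^2 \<Rightarrow> 'b::{banach,second_countable_topology}) \<Rightarrow> (2 \<Rightarrow> real^2 \<Rightarrow> 'b) \<Rightarrow> bool" where
  "H1 \<Omega> f g = (L2 \<Omega> f \<and> (\<forall>i. L2 \<Omega> (g i) \<and> weak_deriv \<Omega> f i (g i)))"

text \<open>F is the vector field of the paper: F in H^1(Omega;R^2) (with weak Jacobian DF i j = d_i F_j),
  div F = 0, curl F = B0 in Omega, and F.nu = 0 on the boundary, the latter in the weak
  (normal trace) sense: integral over Omega of F . grad psi vanishes for all smooth psi up to the boundary.\<close>
definition is_mag_potential :: "(real^2) set \<Rightarrow> (real^2 \<Rightarrow> real) \<Rightarrow> (real^2 \<Rightarrow> real^2) \<Rightarrow> bool" where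
  "is_mag_potential \<Omega> B0 F = (\<exists>DF :: 2 \<Rightarrow> 2 \<Rightarrow> real^2 \<Rightarrow> real.
      (\<forall>j. H1 \<Omega> (\<lambda>x. F x $ j) (\<lambda>i. DF i j)) \<and>
      (AE x in lebesgue_on \<Omega>. DF 1 1 x + DF 2 2 x = 0) \<and>
      (AE x in lebesgue_on \<Omega>. DF 1 2 x - DF 2 1 x = B0 x) \<and>
      (\<forall>\<psi>. smooth \<psi> \<longrightarrow>
         integral\<^sup>L (lebesgue_on \<Omega>) (\<lambda>x. F x $ 1 * pd \<psi> 1 x + F x $ 2 * pd \<psi> 2 x) = 0))"

definition rayleigh :: "(real^2) set \<Rightarrow> (real^2 \<Rightarrow> real^2) \<Rightarrow> (real^2 \<Rightarrow> real) \<Rightarrow> real \<Rightarrow> real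
     \<Rightarrow> (real^2 \<Rightarrow> complex) \<Rightarrow> (2 \<Rightarrow> real^2 \<Rightarrow> complex) \<Rightarrow> real" where
  "rayleigh \<Omega> F a \<kappa> H \<phi> g =
     integral\<^sup>L (lebesgue_on \<Omega>)
       (\<lambda>x. (\<Sum>j\<in>UNIV. (cmod (g j x - \<i> * complex_of_real (\<kappa> * H * F x $ j) * \<phi> x))\<^sup>2)
            - \<kappa>\<^sup>2 * a x * (cmod (\<phi> x))\<^sup>2)
     / integral\<^sup>L (lebesgue_on \<Omega>) (\<lambda>x. (cmod (\<phi> x))\<^sup>2)"

definition mu1 :: "(real^2) set \<Rightarrow> (real^2 \<Rightarrow> real^2) \<Rightarrow> (real^2 \<Rightarrow> real) \<Rightarrow> real \<Rightarrow> real \<Rightarrow> real" where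
  "mu1 \<Omega> F a \<kappa> H = Inf {rayleigh \<Omega> F a \<kappa> H \<phi> g | \<phi> g.
       H1 \<Omega> \<phi> g \<and> integral\<^sup>L (lebesgue_on \<Omega>) (\<lambda>x. (cmod (\<phi> x))\<^sup>2) \<noteq> 0}"

end

theory Submission
  imports Defs
begin

definition pp :: "real \<Rightarrow> real" where "pp s = (if s \<le> 0 then 0 else s^2)"

lemma pp_deriv: "(pp has_real_derivative (2 * max 0 s)) (at s)"
proof (cases "s < 0")
  case True
  have "((\<lambda>_. 0::real) has_real_derivative 0) (at s)" by simp
  then have "(pp has_real_derivative 0) (at s)"
    by (rule has_field_derivative_transform_within_open[where S="{..<0}"])
       (use True in \<open>auto simp: pp_def\<close>)
  then show ?thesis using True by simp
next
  case False
  show ?thesis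
  proof (cases "s > 0")
    case True
    have "((\<lambda>y. y * y) has_real_derivative (2 * s)) (at s)"
      by (auto intro!: derivative_eq_intros)
    then have "(pp has_real_derivative (2 * s)) (at s)"
      by (rule has_field_derivative_transform_within_open[where S="{0<..}"])
         (use True in \<open>auto simp: pp_def power2_eq_square\<close>)
    then show ?thesis using True by simp
  next
    case False
    with \<open>\<not> s<0\<close> have s: "s = 0" by simp
    have "((\<lambda>y. (pp y - pp 0) / (y - 0)) \<longlongrightarrow> 0) (at 0)"
    proof -
      have "((\<lambda>y. max 0 y) \<longlongrightarrow> max 0 (0::real)) (at 0)"
        by (intro tendsto_intros)
      then have "((\<lambda>y. max 0 y) \<longlongrightarrow> 0) (at (0::real))" by simp
      then show ?thesis
        by (rule Lim_transform_eventually)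
           (auto simp: eventually_at_filter pp_def power2_eq_square)
    qed
    then show ?thesis using s by (simp add: has_field_derivative_iff)
  qed
qed


lemma line_deriv:
  fixes h :: "real^2 \<Rightarrow> real"
  assumes dif: "\<And>x. h differentiable (at x)"
  shows "((\<lambda>s. h (x + s *\<^sub>R axis i 1)) has_real_derivative pd h i (x + s *\<^sub>R axis i 1)) (at s)"
proof -
  let ?y = "x + s *\<^sub>R axis i (1::real)"
  have D: "(h has_derivative frechet_derivative h (at ?y)) (at ?y)"
    using dif frechet_derivative_works by blast
  have L: "((\<lambda>s. x + s *\<^sub>R axis i (1::real)) has_derivative (\<lambda>t. t *\<^sub>R axis i 1)) (at s)"
    by (auto intro!: derivative_eq_intros)
  have "((\<lambda>s. h (x + s *\<^sub>R axis i 1)) has_derivative (\<lambda>t. frechet_derivative h (at ?y) (t *\<^sub>R axis i 1))) (at s)"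
    using diff_chain_at[OF L D] by (simp add: o_def)
  moreover have "(\<lambda>t. frechet_derivative h (at ?y) (t *\<^sub>R axis i 1)) = (*) (pd h i ?y)"
  proof
    fix t
    have "linear (frechet_derivative h (at ?y))" using D has_derivative_linear by blast
    then show "frechet_derivative h (at ?y) (t *\<^sub>R axis i 1) = pd h i ?y * t"
      by (simp add: pd_def linear_scale)
  qed
  ultimately show ?thesis by (simp add: has_field_derivative_def)
qed

lemma ibp0:
  fixes h :: "real^2 \<Rightarrow> real"
  assumes dif: "\<And>x. h differentiable (at x)" and cont: "continuous_on UNIV (pd h i)"
    and K: "compact K" and supp: "\<And>x. x \<notin> K \<Longrightarrow> h x = 0"
  shows "integral\<^sup>L lborel (pd h i) = 0"
proof -
  define e :: "real^2" where "e = axis i 1"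
  obtain R where R: "R > 0" "\<And>x. x \<in> K \<Longrightarrow> norm x \<le> R"
    using compact_imp_bounded[OF K] unfolding bounded_pos by metis
  have "bounded (pd h i ` cball 0 (R+2))"
    by (intro compact_imp_bounded compact_continuous_image continuous_on_subset[OF cont]) auto
  then obtain M where "\<forall>x\<in>pd h i ` cball 0 (R+2). norm x \<le> M"
    unfolding bounded_iff by blast
  then have M: "\<And>y. y \<in> cball 0 (R+2) \<Longrightarrow> \<bar>pd h i y\<bar> \<le> M" by auto
  have hcont: "continuous_on UNIV h"
    using dif by (simp add: continuous_at_imp_continuous_on differentiable_imp_continuous_within)
  have hint: "integrable lborel h"
  proof -
    have "integrable lborel (\<lambda>x. indicator K x *\<^sub>R h x)"
      by (rule borel_integrable_compact[OF K continuous_on_subset[OF hcont]]) auto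
    moreover have "(\<lambda>x. indicator K x *\<^sub>R h x) = h"
      using supp by (force simp: indicator_def)
    ultimately show ?thesis by simp
  qed
  have hmeas: "h \<in> borel_measurable borel"
    using hcont by (rule borel_measurable_continuous_onI)
  have shift: "integrable lborel (\<lambda>x. h (c + x)) \<and> integral\<^sup>L lborel (\<lambda>x. h (c + x)) = integral\<^sup>L lborel h" for c :: "real^2"
  proof -
    have m: "(+) c \<in> measurable lborel borel" by simp
    have "integrable (distr lborel borel ((+) c)) h" using hint by (simp add: lborel_distr_plus)
    then have "integrable lborel (\<lambda>x. h (c + x))"
      using integrable_distr_eq[OF m hmeas] by simp
    moreover have "integral\<^sup>L (distr lborel borel ((+) c)) h = integral\<^sup>L lborel (\<lambda>x. h (c + x))"
      by (rule integral_distr[OF m hmeas])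
    ultimately show ?thesis by (simp add: lborel_distr_plus)
  qed
  define t :: "nat \<Rightarrow> real" where "t n = inverse (real (Suc n))" for n
  have tpos: "t n > 0" "t n \<le> 1" for n by (auto simp: t_def field_simps)
  define s where "s n x = (h (x + t n *\<^sub>R e) - h x) / t n" for n x
  have s0: "integral\<^sup>L lborel (s n) = 0" for n
  proof -
    have "integral\<^sup>L lborel (s n) = (integral\<^sup>L lborel (\<lambda>x. h (t n *\<^sub>R e + x)) - integral\<^sup>L lborel h) / t n"
      unfolding s_def using shift[of "t n *\<^sub>R e"] hint by (simp add: add.commute)
    then show ?thesis using shift[of "t n *\<^sub>R e"] by simp
  qed
  have lim: "(\<lambda>n. integral\<^sup>L lborel (s n)) \<longlonglongrightarrow> integral\<^sup>L lborel (pd h i)"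
  proof (rule integral_dominated_convergence[where w="\<lambda>x. M * indicator (cball 0 (R+1)) x"])
    show "pd h i \<in> borel_measurable lborel"
      using cont by (simp add: borel_measurable_continuous_onI)
    show "s n \<in> borel_measurable lborel" for n
    proof -
      have c1: "continuous_on UNIV (\<lambda>x. h (x + t n *\<^sub>R e))"
        by (rule continuous_on_compose2[OF hcont]) (auto intro!: continuous_intros)
      have "continuous_on UNIV (s n)"
        unfolding s_def using tpos(1)[of n]
        by (intro continuous_on_divide continuous_on_diff c1 hcont continuous_on_const) auto
      then show ?thesis by (simp add: borel_measurable_continuous_onI)
    qed
    show "integrable lborel (\<lambda>x. M * indicator (cball 0 (R+1)) x)"
      by (intro integrable_mult_right integrable_real_indicator emeasure_compact_finite) auto
    show "AE x in lborel. (\<lambda>n. s n x) \<longlonglongrightarrow> pd h i x"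
    proof (intro AE_I2)
      fix x
      have d: "((\<lambda>u. h (x + u *\<^sub>R e)) has_real_derivative pd h i x) (at 0)"
        using line_deriv[OF dif, of x i 0] by (simp add: e_def)
      then have "((\<lambda>u. (h (x + u *\<^sub>R e) - h x) / u) \<longlongrightarrow> pd h i x) (at 0)"
        by (simp add: has_field_derivative_iff)
      moreover have "filterlim t (at 0) sequentially"
        unfolding filterlim_at
      proof -
        have "t = (\<lambda>n. inverse (real (Suc n)))" by (simp add: t_def fun_eq_iff)
        then show "(\<forall>\<^sub>F n in sequentially. t n \<in> UNIV \<and> t n \<noteq> 0) \<and> t \<longlonglongrightarrow> 0"
          using tpos LIMSEQ_inverse_real_of_nat by (auto intro: less_imp_neq[symmetric])
      qed
      ultimately have "(\<lambda>n. (h (x + t n *\<^sub>R e) - h x) / t n) \<longlonglongrightarrow> pd h i x"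
        by (rule filterlim_compose)
      then show "(\<lambda>n. s n x) \<longlonglongrightarrow> pd h i x" by (simp add: s_def)
    qed
    show "AE x in lborel. norm (s n x) \<le> M * indicator (cball 0 (R+1)) x" for n
    proof (intro AE_I2)
      fix x :: "real^2"
      show "norm (s n x) \<le> M * indicator (cball 0 (R+1)) x"
      proof (cases "x \<in> cball 0 (R+1)")
        case True
        have der: "DERIV (\<lambda>u. h (x + u *\<^sub>R e)) u :> pd h i (x + u *\<^sub>R e)" for u
          using line_deriv[OF dif] unfolding e_def by blast
        have "\<exists>z. 0 < z \<and> z < t n \<and>
          h (x + t n *\<^sub>R e) - h (x + 0 *\<^sub>R e) = (t n - 0) * pd h i (x + z *\<^sub>R e)"
          by (rule MVT2[OF tpos(1)[of n]]) (rule der)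
        then obtain z where z: "0 < z" "z < t n"
          "h (x + t n *\<^sub>R e) - h (x + 0 *\<^sub>R e) = (t n - 0) * pd h i (x + z *\<^sub>R e)"
          by blast
        have "norm (x + z *\<^sub>R e) \<le> norm x + norm (z *\<^sub>R e)" by (rule norm_triangle_ineq)
        also have "\<dots> \<le> R + 2" using True z tpos[of n] by (simp add: e_def)
        finally have "\<bar>pd h i (x + z *\<^sub>R e)\<bar> \<le> M" by (simp add: M)
        then show ?thesis using True z tpos[of n] by (simp add: s_def)
      next
        case False
        then have nx: "norm x > R + 1" by simp
        have "x \<notin> K"
        proof
          assume "x \<in> K" then have "norm x \<le> R" using R(2) by blast
          then show False using nx by linarith
        qed
        moreover have "x + t n *\<^sub>R e \<notin> K"
        proof
          assume "x + t n *\<^sub>R e \<in> K"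
          then have "norm (x + t n *\<^sub>R e) \<le> R" using R(2) by blast
          moreover have "norm x \<le> norm (x + t n *\<^sub>R e) + norm (t n *\<^sub>R e)"
            by (metis add_diff_cancel norm_triangle_ineq4)
          moreover have "norm (t n *\<^sub>R e) = t n" using tpos[of n] by (simp add: e_def)
          ultimately show False using nx tpos[of n] by linarith
        qed
        ultimately show ?thesis using False by (simp add: s_def supp)
      qed
    qed
  qed
  then show ?thesis using s0 by (simp add: LIMSEQ_const_iff)
qed


lemma pd_mult:
  fixes f g :: "real^2 \<Rightarrow> real"
  assumes "\<And>x. f differentiable (at x)" "\<And>x. g differentiable (at x)"
  shows "pd (\<lambda>x. f x * g x) i x = pd f i x * g x + f x * pd g i x"
    and "(\<lambda>x. f x * g x) differentiable (at x)"
proof -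
  have F: "(f has_derivative frechet_derivative f (at x)) (at x)"
    using assms(1) frechet_derivative_works by blast
  have G: "(g has_derivative frechet_derivative g (at x)) (at x)"
    using assms(2) frechet_derivative_works by blast
  have P: "((\<lambda>x. f x * g x) has_derivative
      (\<lambda>h. f x * frechet_derivative g (at x) h + frechet_derivative f (at x) h * g x)) (at x)"
    by (rule has_derivative_mult[OF F G])
  then show "(\<lambda>x. f x * g x) differentiable (at x)" by (rule differentiableI)
  from frechet_derivative_at[OF P] show "pd (\<lambda>x. f x * g x) i x = pd f i x * g x + f x * pd g i x"
    unfolding pd_def frechet_derivative_at[OF P, symmetric] by simp
qed

lemma diff_cont:
  fixes f :: "real^2 \<Rightarrow> real"
  assumes "\<And>x. f differentiable (at x)"
  shows "continuous_on UNIV f"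
  using assms by (simp add: continuous_at_imp_continuous_on differentiable_imp_continuous_within)

lemma int_cpt:
  fixes f :: "real^2 \<Rightarrow> real"
  assumes "continuous_on UNIV f" "compact K" "\<And>x. x \<notin> K \<Longrightarrow> f x = 0"
  shows "integrable lborel f"
proof -
  have "integrable lborel (\<lambda>x. indicator K x *\<^sub>R f x)"
    by (rule borel_integrable_compact[OF assms(2) continuous_on_subset[OF assms(1)]]) auto
  moreover have "(\<lambda>x. indicator K x *\<^sub>R f x) = f"
    using assms(3) by (force simp: indicator_def)
  ultimately show ?thesis by simp
qed

lemma ibp:
  fixes \<psi> \<phi> :: "real^2 \<Rightarrow> real"
  assumes d1: "\<And>x. \<psi> differentiable (at x)" and c1: "\<And>i. continuous_on UNIV (pd \<psi> i)"
    and K1: "compact K1" and s1: "\<And>x. x \<notin> K1 \<Longrightarrow> \<psi> x = 0"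
    and d2: "\<And>x. \<phi> differentiable (at x)" and c2: "\<And>i. continuous_on UNIV (pd \<phi> i)"
    and K2: "compact K2" and s2: "\<And>x. x \<notin> K2 \<Longrightarrow> \<phi> x = 0"
  shows "integral\<^sup>L lborel (\<lambda>x. pd \<psi> i x * \<phi> x) = - integral\<^sup>L lborel (\<lambda>x. \<psi> x * pd \<phi> i x)"
proof -
  have cc1: "continuous_on UNIV \<psi>" using d1 by (rule diff_cont)
  have cc2: "continuous_on UNIV \<phi>" using d2 by (rule diff_cont)
  have I1: "integrable lborel (\<lambda>x. pd \<psi> i x * \<phi> x)"
    by (rule int_cpt[OF _ K2]) (auto intro!: continuous_intros c1 cc2 simp: s2)
  have I2: "integrable lborel (\<lambda>x. \<psi> x * pd \<phi> i x)"
    by (rule int_cpt[OF _ K1]) (auto intro!: continuous_intros c2 cc1 simp: s1)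
  have eq: "pd (\<lambda>x. \<psi> x * \<phi> x) i = (\<lambda>x. pd \<psi> i x * \<phi> x + \<psi> x * pd \<phi> i x)"
    using pd_mult(1)[OF d1 d2] by blast
  have "integral\<^sup>L lborel (pd (\<lambda>x. \<psi> x * \<phi> x) i) = 0"
  proof (rule ibp0[OF _ _ K1])
    show "(\<lambda>x. \<psi> x * \<phi> x) differentiable (at x)" for x using pd_mult(2)[OF d1 d2] by blast
    show "continuous_on UNIV (pd (\<lambda>x. \<psi> x * \<phi> x) i)"
      unfolding eq by (intro continuous_intros c1 c2 cc1 cc2)
    show "\<psi> x * \<phi> x = 0" if "x \<notin> K1" for x using s1[OF that] by simp
  qed
  then have "integral\<^sup>L lborel (\<lambda>x. pd \<psi> i x * \<phi> x) + integral\<^sup>L lborel (\<lambda>x. \<psi> x * pd \<phi> i x) = 0"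
    unfolding eq using I1 I2 by simp
  then show ?thesis by linarith
qed

definition bump :: "real^2 \<Rightarrow> real \<Rightarrow> real^2 \<Rightarrow> real" where
  "bump c r x = pp (r^2 - (x - c) \<bullet> (x - c))"

lemma bump_has_deriv:
  "(bump c r has_derivative (\<lambda>h. 2 * max 0 (r^2 - (x - c) \<bullet> (x - c)) * (- 2 * ((x - c) \<bullet> h)))) (at x)"
proof -
  have U: "((\<lambda>x. r^2 - (x - c) \<bullet> (x - c)) has_derivative (\<lambda>h. - 2 * ((x - c) \<bullet> h))) (at x)"
    by (auto intro!: derivative_eq_intros simp: inner_commute algebra_simps)
  have P: "(pp has_derivative (\<lambda>s. 2 * max 0 (r^2 - (x - c) \<bullet> (x - c)) * s)) (at (r^2 - (x - c) \<bullet> (x - c)))"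
    using pp_deriv[of "r^2 - (x - c) \<bullet> (x - c)"] by (simp add: has_field_derivative_def)
  show ?thesis
    using has_derivative_compose[OF U P] unfolding bump_def by simp
qed

lemma bump_diff: "bump c r differentiable (at x)"
  using bump_has_deriv by (rule differentiableI)

lemma bump_pd: "pd (bump c r) i x = - 4 * max 0 (r^2 - (x - c) \<bullet> (x - c)) * (x - c) $ i"
  unfolding pd_def frechet_derivative_at[OF bump_has_deriv[of c r x], symmetric]
  by (simp add: inner_axis algebra_simps)

lemma bump_pd_cont: "continuous_on UNIV (pd (bump c r) i)"
  unfolding bump_pd by (intro continuous_intros)

lemma bump_supp: "r \<ge> 0 \<Longrightarrow> x \<notin> cball c r \<Longrightarrow> bump c r x = 0"
proof -
  assume r: "r \<ge> 0" and "x \<notin> cball c r"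
  then have "dist c x > r" by simp
  then have n: "norm (x - c) > r" by (simp add: dist_norm norm_minus_commute)
  have "r^2 \<le> norm (x - c) ^ 2" using n r by (intro power_mono) auto
  then show ?thesis
    by (simp add: bump_def pp_def power2_norm_eq_inner)
qed

lemma bump_nonneg: "bump c r x \<ge> 0"
  by (simp add: bump_def pp_def)

lemma bump_le: "bump c r x \<le> r^4"
proof -
  define u where "u = r^2 - (x - c) \<bullet> (x - c)"
  have u: "u \<le> r^2" unfolding u_def by simp
  show ?thesis
  proof (cases "u \<le> 0")
    case True then show ?thesis by (simp add: bump_def pp_def u_def[symmetric])
  next
    case False
    then have "u^2 \<le> (r^2)^2" using u by (intro power_mono) auto
    then show ?thesis using False by (simp add: bump_def pp_def u_def[symmetric])
  qed
qed

lemma bump_pos: "r > 0 \<Longrightarrow> x \<in> ball c (r/2) \<Longrightarrow> bump c r x \<ge> (r^2/2)^2"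
proof -
  assume r: "r > 0" and x: "x \<in> ball c (r/2)"
  then have "norm (x - c) < r/2" by (simp add: dist_norm norm_minus_commute)
  then have "norm (x - c)^2 \<le> (r/2)^2" by (intro power_mono) auto
  then have i4: "(x - c) \<bullet> (x - c) * 4 \<le> r^2"
    by (simp add: power2_norm_eq_inner power_divide)
  have "0 \<le> (x - c) \<bullet> (x - c)" by simp
  then have u: "r^2 - (x - c) \<bullet> (x - c) \<ge> r^2/2" using i4 by linarith
  moreover have "r^2/2 > 0" using r by simp
  ultimately have "\<not> (r^2 - (x - c) \<bullet> (x - c) \<le> 0)" by linarith
  moreover have "(r^2/2)^2 \<le> (r^2 - (x - c) \<bullet> (x - c))^2"
    using u \<open>r^2/2 > 0\<close> by (intro power_mono) auto
  ultimately show ?thesis unfolding bump_def pp_def by simp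
qed


lemma Ck1: "Ck 1 g = ((\<forall>x. g differentiable (at x)) \<and> (\<forall>i. continuous_on UNIV (pd g i)))"
  by (simp add: One_nat_def)

lemma cont_bound:
  fixes f :: "real^2 \<Rightarrow> real"
  assumes "continuous_on UNIV f" "compact K" "\<And>x. x \<notin> K \<Longrightarrow> f x = 0"
  shows "\<exists>B. \<forall>x. \<bar>f x\<bar> \<le> B"
proof -
  have "bounded (f ` K)"
    by (intro compact_imp_bounded compact_continuous_image continuous_on_subset[OF assms(1)] assms(2)) auto
  then obtain B where B: "\<forall>y\<in>f ` K. norm y \<le> B" unfolding bounded_iff by blast
  have "\<bar>f x\<bar> \<le> max B 0" for x
  proof (cases "x \<in> K")
    case True then show ?thesis using B by force
  next
    case False then show ?thesis using assms(3) by simp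
  qed
  then show ?thesis by blast
qed

lemma omega_sets:
  assumes "open \<Omega>" "bounded \<Omega>"
  shows "\<Omega> \<in> sets lebesgue" "\<Omega> \<in> lmeasurable" "finite_measure (lebesgue_on \<Omega>)"
  using lmeasurable_open[OF assms(2,1)] by (auto intro: finite_measure_lebesgue_on)

lemma int_on_bounded:
  fixes f :: "real^2 \<Rightarrow> real"
  assumes "finite_measure M" "f \<in> borel_measurable M" "\<And>x. \<bar>f x\<bar> \<le> B"
  shows "integrable M f"
  using finite_measure.integrable_const_bound[OF assms(1), of f B] assms by simp

lemma cont_meas:
  fixes f :: "real^2 \<Rightarrow> 'b::{banach,second_countable_topology}"
  assumes "continuous_on UNIV f" "\<Omega> \<in> sets lebesgue"
  shows "f \<in> borel_measurable (lebesgue_on \<Omega>)"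
  by (rule continuous_imp_measurable_on_sets_lebesgue[OF continuous_on_subset[OF assms(1)] assms(2)]) auto

lemma restr_lborel:
  fixes f :: "real^2 \<Rightarrow> real"
  assumes "\<Omega> \<in> sets lebesgue" "continuous_on UNIV f" "\<And>x. x \<notin> \<Omega> \<Longrightarrow> f x = 0"
  shows "integral\<^sup>L (lebesgue_on \<Omega>) f = integral\<^sup>L lborel f"
proof -
  have "integral\<^sup>L (lebesgue_on \<Omega>) f = integral\<^sup>L lebesgue (\<lambda>x. indicator \<Omega> x *\<^sub>R f x)"
    by (rule integral_restrict_space) (simp add: assms(1))
  also have "(\<lambda>x. indicator \<Omega> x *\<^sub>R f x) = f"
    using assms(3) by (force simp: indicator_def)
  also have "integral\<^sup>L lebesgue f = integral\<^sup>L lborel f"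
    by (rule integral_completion) (simp add: borel_measurable_continuous_onI[OF assms(2)])
  finally show ?thesis .
qed

lemma int_pos:
  fixes f :: "real^2 \<Rightarrow> real"
  assumes fin: "finite_measure (lebesgue_on \<Omega>)" and O: "\<Omega> \<in> sets lebesgue"
    and b: "ball q s \<subseteq> \<Omega>" and s: "s > 0" and m: "m > 0"
    and I: "integrable (lebesgue_on \<Omega>) f"
    and ge: "\<And>x. x \<in> \<Omega> \<Longrightarrow> m * indicator (ball q s) x \<le> f x"
  shows "integral\<^sup>L (lebesgue_on \<Omega>) f > 0"
proof -
  have bs: "ball q s \<in> sets (lebesgue_on \<Omega>)"
    using b O by (simp add: sets_restrict_space_iff)
  have Ii: "integrable (lebesgue_on \<Omega>) (indicator (ball q s) :: real^2 \<Rightarrow> real)"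
    using bs finite_measure.emeasure_finite[OF fin] by (simp add: less_top)
  have "integral\<^sup>L (lebesgue_on \<Omega>) (\<lambda>x. m * indicator (ball q s) x) \<le> integral\<^sup>L (lebesgue_on \<Omega>) f"
    using Ii I ge by (intro integral_mono) auto
  moreover have "integral\<^sup>L (lebesgue_on \<Omega>) (\<lambda>x. m * indicator (ball q s) x) = m * measure lebesgue (ball q s)"
  proof -
    have "integral\<^sup>L (lebesgue_on \<Omega>) (\<lambda>x. m * indicator (ball q s) x) = m * measure (lebesgue_on \<Omega>) (ball q s)"
      using b by (simp add: Int_absorb2)
    also have "measure (lebesgue_on \<Omega>) (ball q s) = measure lebesgue (ball q s)"
      by (rule measure_restrict_space) (use O b in auto)
    finally show ?thesis .
  qed
  moreover have "measure lebesgue (ball q s) > 0"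
    using s by simp
  ultimately show ?thesis using m by (smt (verit) mult_pos_pos)
qed

lemma cm: "(cmod (complex_of_real u - \<i> * complex_of_real v * complex_of_real w))^2 = u^2 + (v * w)^2"
proof -
  have "complex_of_real u - \<i> * complex_of_real v * complex_of_real w = Complex u (-(v * w))"
    by (simp add: complex_eq_iff)
  then show ?thesis by (simp only: cmod_power2) simp
qed


lemma bump_pd_supp: "r \<ge> 0 \<Longrightarrow> x \<notin> cball c r \<Longrightarrow> pd (bump c r) i x = 0"
proof -
  assume r: "r \<ge> 0" and "x \<notin> cball c r"
  then have "dist c x > r" by simp
  then have n: "norm (x - c) > r" by (simp add: dist_norm norm_minus_commute)
  have "r^2 \<le> norm (x - c) ^ 2" using n r by (intro power_mono) auto
  then show ?thesis
    by (simp add: bump_pd power2_norm_eq_inner)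
qed

lemma rayleigh_lb:
  fixes \<phi> :: "real^2 \<Rightarrow> complex"
  assumes Ma: "Ma \<ge> 0" "\<And>x. x \<in> \<Omega> \<Longrightarrow> a x \<le> Ma" and H: "H1 \<Omega> \<phi> g"
    and D: "integral\<^sup>L (lebesgue_on \<Omega>) (\<lambda>x. (cmod (\<phi> x))\<^sup>2) \<noteq> 0"
  shows "rayleigh \<Omega> F a \<kappa> H \<phi> g \<ge> -(\<kappa>\<^sup>2 * Ma)"
proof -
  let ?M = "lebesgue_on \<Omega>"
  define D' where "D' = integral\<^sup>L ?M (\<lambda>x. (cmod (\<phi> x))\<^sup>2)"
  define f where "f x = (\<Sum>j\<in>UNIV. (cmod (g j x - \<i> * complex_of_real (\<kappa> * H * F x $ j) * \<phi> x))\<^sup>2)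
            - \<kappa>\<^sup>2 * a x * (cmod (\<phi> x))\<^sup>2" for x
  have r: "rayleigh \<Omega> F a \<kappa> H \<phi> g = integral\<^sup>L ?M f / D'"
    unfolding rayleigh_def f_def D'_def ..
  have "D' \<ge> 0" unfolding D'_def by (intro Bochner_Integration.integral_nonneg) auto
  then have Dp: "D' > 0" using D unfolding D'_def by linarith
  have iD: "integrable ?M (\<lambda>x. (cmod (\<phi> x))\<^sup>2)" using H unfolding H1_def L2_def by simp
  show ?thesis
  proof (cases "integrable ?M f")
    case True
    have "integral\<^sup>L ?M (\<lambda>x. -(\<kappa>\<^sup>2 * Ma) * (cmod (\<phi> x))\<^sup>2) \<le> integral\<^sup>L ?M f"
    proof (rule Bochner_Integration.integral_mono[OF _ True])
      show "integrable ?M (\<lambda>x. -(\<kappa>\<^sup>2 * Ma) * (cmod (\<phi> x))\<^sup>2)" using iD by simp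
      fix x assume "x \<in> space ?M"
      then have x: "x \<in> \<Omega>" by simp
      have "\<kappa>\<^sup>2 * a x * (cmod (\<phi> x))\<^sup>2 \<le> \<kappa>\<^sup>2 * Ma * (cmod (\<phi> x))\<^sup>2"
        using Ma(2)[OF x] by (intro mult_right_mono mult_left_mono) auto
      moreover have "0 \<le> (\<Sum>j\<in>UNIV. (cmod (g j x - \<i> * complex_of_real (\<kappa> * H * F x $ j) * \<phi> x))\<^sup>2)"
        by (intro sum_nonneg) auto
      moreover have "-(\<kappa>\<^sup>2 * Ma) * (cmod (\<phi> x))\<^sup>2 = -(\<kappa>\<^sup>2 * Ma * (cmod (\<phi> x))\<^sup>2)" by simp
      ultimately show "-(\<kappa>\<^sup>2 * Ma) * (cmod (\<phi> x))\<^sup>2 \<le> f x" unfolding f_def by linarith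
    qed
    then have "-(\<kappa>\<^sup>2 * Ma) * D' \<le> integral\<^sup>L ?M f" unfolding D'_def by simp
    then show ?thesis unfolding r using Dp by (simp add: le_divide_eq)
  next
    case False
    then show ?thesis unfolding r using Ma(1) by (simp add: not_integrable_integral_eq)
  qed
qed

theorem lemma9p8:
  fixes \<Omega> :: "(real^2) set" and B0 a :: "real^2 \<Rightarrow> real" and F :: "real^2 \<Rightarrow> real^2"
    and Cmax :: real
  assumes "open \<Omega>" and "bounded \<Omega>" and "simply_connected \<Omega>" and "smooth_boundary \<Omega>"
    and "Cinf_closure \<Omega> B0"
    and "is_mag_potential \<Omega> B0 F"
    and "Cmax > 0"
    and "C1_closure \<Omega> a"
    and "{x \<in> closure \<Omega>. a x > 0} \<noteq> {}"
  shows "\<exists>\<kappa>0>0. \<forall>\<kappa> H. \<kappa> \<ge> \<kappa>0 \<and> 0 \<le> H \<and> H \<le> Cmax / \<kappa> \<longrightarrow> mu1 \<Omega> F a \<kappa> H < 0"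
proof -
  note O = omega_sets[OF assms(1,2)]
  let ?M = "lebesgue_on \<Omega>"
  from assms(8) obtain ga where ga: "Ck 1 ga" "\<forall>x\<in>closure \<Omega>. a x = ga x"
    unfolding C1_closure_def by blast
  have gad: "\<And>x. ga differentiable (at x)" using ga(1) by (simp add: Ck1)
  have gac: "continuous_on UNIV ga" using gad by (rule diff_cont)
  have aO: "\<And>x. x \<in> \<Omega> \<Longrightarrow> a x = ga x" using ga(2) closure_subset by blast
  from assms(9) obtain p where p: "p \<in> closure \<Omega>" "a p > 0" by blast
  define c0 where "c0 = ga p / 2"
  have c0: "c0 > 0" "ga p > c0" using p ga(2) by (auto simp: c0_def)
  have "open {y. c0 < ga y}" using gac by (intro open_Collect_less continuous_on_const)
  then obtain \<delta> where \<delta>: "\<delta> > 0" "ball p \<delta> \<subseteq> {y. c0 < ga y}"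
    using c0(2) openE by blast
  obtain q where q: "q \<in> \<Omega>" "dist q p < \<delta>/2"
    using p(1) \<delta>(1) unfolding closure_approachable by (metis half_gt_zero)
  obtain \<epsilon> where \<epsilon>: "\<epsilon> > 0" "ball q \<epsilon> \<subseteq> \<Omega>" using openE[OF assms(1) q(1)] by blast
  define r where "r = min (\<epsilon>/2) (\<delta>/4)"
  have r: "r > 0" "r < \<epsilon>" "r < \<delta>/2" using \<epsilon> \<delta> by (auto simp: r_def)
  have cbO: "cball q r \<subseteq> \<Omega>"
  proof
    fix y assume "y \<in> cball q r"
    then have "dist q y < \<epsilon>" using r by simp
    then show "y \<in> \<Omega>" using \<epsilon>(2) by auto
  qed
  have cbga: "c0 < ga y" if "y \<in> cball q r" for y
  proof -
    have "dist p y \<le> dist p q + dist q y" by (rule dist_triangle)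
    also have "\<dots> < \<delta>" using q(2) that r by (simp add: dist_commute)
    finally show ?thesis using \<delta>(2) by auto
  qed
  define \<phi> where "\<phi> = bump q r"
  have \<phi>d: "\<And>x. \<phi> differentiable (at x)" unfolding \<phi>_def by (rule bump_diff)
  have \<phi>c: "\<And>i. continuous_on UNIV (pd \<phi> i)" unfolding \<phi>_def by (rule bump_pd_cont)
  have \<phi>cont: "continuous_on UNIV \<phi>" using \<phi>d by (rule diff_cont)
  have \<phi>s: "\<And>x. x \<notin> cball q r \<Longrightarrow> \<phi> x = 0" unfolding \<phi>_def using r by (intro bump_supp) auto
  have \<phi>ps: "\<And>x i. x \<notin> cball q r \<Longrightarrow> pd \<phi> i x = 0" unfolding \<phi>_def using r by (intro bump_pd_supp) auto
  have \<phi>O: "\<And>x. x \<notin> \<Omega> \<Longrightarrow> \<phi> x = 0" using \<phi>s cbO by blast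
  have \<phi>nn: "\<And>x. \<phi> x \<ge> 0" unfolding \<phi>_def by (rule bump_nonneg)
  define m0 where "m0 = ((r^2/2)^2)^2"
  have m0: "m0 > 0" using r by (simp add: m0_def)
  have \<phi>pos: "m0 \<le> (\<phi> x)^2" if "x \<in> ball q (r/2)" for x
  proof -
    have "(r^2/2)^2 \<le> \<phi> x" using bump_pos[OF r(1) that] by (simp add: \<phi>_def)
    then show ?thesis unfolding m0_def by (intro power_mono) auto
  qed
  have bO: "ball q (r/2) \<subseteq> \<Omega>" using cbO r by auto
  define \<Phi> :: "real^2 \<Rightarrow> complex" where "\<Phi> x = complex_of_real (\<phi> x)" for x
  define G :: "2 \<Rightarrow> real^2 \<Rightarrow> complex" where "G j x = complex_of_real (pd \<phi> j x)" for j x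
  have cpt: "compact (cball q r)" by simp
  have meas: "f \<in> borel_measurable ?M" if "continuous_on UNIV f" for f :: "real^2 \<Rightarrow> real"
    by (rule cont_meas[OF that O(1)])
  have intc: "integrable ?M f" if fc: "continuous_on UNIV f" and fs: "\<And>x. x \<notin> cball q r \<Longrightarrow> f x = 0"
    for f :: "real^2 \<Rightarrow> real"
  proof -
    obtain B where "\<forall>x. \<bar>f x\<bar> \<le> B" using cont_bound[OF fc cpt fs] by blast
    then show ?thesis using int_on_bounded[OF O(3) meas[OF fc]] by blast
  qed
  have L2\<Phi>: "L2 \<Omega> \<Phi>"
    unfolding L2_def
  proof
    show "\<Phi> \<in> borel_measurable ?M" unfolding \<Phi>_def
      by (rule cont_meas[OF _ O(1)]) (intro continuous_intros \<phi>cont)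
    have "integrable ?M (\<lambda>x. (\<phi> x)^2)"
      by (rule intc) (auto intro!: continuous_intros \<phi>cont simp: \<phi>s)
    then show "integrable ?M (\<lambda>x. (norm (\<Phi> x))^2)" by (simp add: \<Phi>_def)
  qed
  have L2G: "L2 \<Omega> (G i)" for i
    unfolding L2_def
  proof
    show "G i \<in> borel_measurable ?M" unfolding G_def
      by (rule cont_meas[OF _ O(1)]) (intro continuous_intros \<phi>c)
    have "integrable ?M (\<lambda>x. (pd \<phi> i x)^2)"
      by (rule intc) (auto intro!: continuous_intros \<phi>c simp: \<phi>ps)
    then show "integrable ?M (\<lambda>x. (norm (G i x))^2)" by (simp add: G_def)
  qed
  have WD: "weak_deriv \<Omega> \<Phi> i (G i)" for i
    unfolding weak_deriv_def
  proof (intro allI impI)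
    fix \<psi> assume "test_fun \<Omega> \<psi>"
    then obtain K where \<psi>: "smooth \<psi>" "compact K" "K \<subseteq> \<Omega>" "\<And>x. x \<notin> K \<Longrightarrow> \<psi> x = 0"
      unfolding test_fun_def by blast
    have "Ck 1 \<psi>" using \<psi>(1) unfolding smooth_def by blast
    then have \<psi>d: "\<And>x. \<psi> differentiable (at x)" and \<psi>c: "\<And>i. continuous_on UNIV (pd \<psi> i)"
      by (auto simp: Ck1)
    have \<psi>O: "\<And>x. x \<notin> \<Omega> \<Longrightarrow> \<psi> x = 0" using \<psi>(3,4) by blast
    have \<psi>cont: "continuous_on UNIV \<psi>" using \<psi>d by (rule diff_cont)
    have e1: "(\<lambda>x. pd \<psi> i x *\<^sub>R \<Phi> x) = (\<lambda>x. complex_of_real (pd \<psi> i x * \<phi> x))"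
      by (simp add: \<Phi>_def fun_eq_iff scaleR_conv_of_real)
    have e2: "(\<lambda>x. \<psi> x *\<^sub>R G i x) = (\<lambda>x. complex_of_real (\<psi> x * pd \<phi> i x))"
      by (simp add: G_def fun_eq_iff scaleR_conv_of_real)
    have r1: "integral\<^sup>L ?M (\<lambda>x. pd \<psi> i x * \<phi> x) = integral\<^sup>L lborel (\<lambda>x. pd \<psi> i x * \<phi> x)"
      by (rule restr_lborel[OF O(1)]) (auto intro!: continuous_intros \<psi>c \<phi>cont simp: \<phi>O)
    have r2: "integral\<^sup>L ?M (\<lambda>x. \<psi> x * pd \<phi> i x) = integral\<^sup>L lborel (\<lambda>x. \<psi> x * pd \<phi> i x)"
      by (rule restr_lborel[OF O(1)]) (auto intro!: continuous_intros \<psi>cont \<phi>c simp: \<psi>O)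
    have "integral\<^sup>L lborel (\<lambda>x. pd \<psi> i x * \<phi> x) = - integral\<^sup>L lborel (\<lambda>x. \<psi> x * pd \<phi> i x)"
      by (rule ibp[OF \<psi>d \<psi>c \<psi>(2) \<psi>(4) \<phi>d \<phi>c cpt \<phi>s])
    then show "integral\<^sup>L ?M (\<lambda>x. pd \<psi> i x *\<^sub>R \<Phi> x) = - integral\<^sup>L ?M (\<lambda>x. \<psi> x *\<^sub>R G i x)"
      unfolding e1 e2 integral_complex_of_real r1 r2 by simp
  qed
  have H1: "H1 \<Omega> \<Phi> G" unfolding H1_def using L2\<Phi> L2G WD by blast
  have Deq: "integral\<^sup>L ?M (\<lambda>x. (cmod (\<Phi> x))^2) = integral\<^sup>L ?M (\<lambda>x. (\<phi> x)^2)"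
    by (simp add: \<Phi>_def)
  have Dpos: "integral\<^sup>L ?M (\<lambda>x. (\<phi> x)^2) > 0"
  proof (rule int_pos[OF O(3) O(1) bO _ m0])
    show "0 < r/2" using r by simp
    show "integrable ?M (\<lambda>x. (\<phi> x)^2)"
      by (rule intc) (auto intro!: continuous_intros \<phi>cont simp: \<phi>s)
    show "m0 * indicator (ball q (r/2)) x \<le> (\<phi> x)^2" for x
      using \<phi>pos[of x] by (cases "x \<in> ball q (r/2)") auto
  qed
  define A where "A x = (\<Sum>j\<in>UNIV. (pd \<phi> j x)^2)" for x
  define B where "B x = (\<Sum>j\<in>UNIV. (F x $ j * \<phi> x)^2)" for x
  define C where "C x = ga x * (\<phi> x)^2" for x
  have intA: "integrable ?M A"
    unfolding A_def by (rule intc) (auto intro!: continuous_intros \<phi>c simp: \<phi>ps)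
  have intC: "integrable ?M C"
    unfolding C_def by (rule intc) (auto intro!: continuous_intros \<phi>cont gac simp: \<phi>s)
  obtain Bp where Bp: "\<forall>x. \<bar>(\<phi> x)^2\<bar> \<le> Bp"
    using cont_bound[of "\<lambda>x. (\<phi> x)^2", OF _ cpt] \<phi>cont \<phi>s by (auto intro!: continuous_intros)
  from assms(6) obtain DF :: "2 \<Rightarrow> 2 \<Rightarrow> real^2 \<Rightarrow> real" where DF: "\<forall>j. H1 \<Omega> (\<lambda>x. F x $ j) (\<lambda>i. DF i j)"
    unfolding is_mag_potential_def by blast
  have FL2: "(\<lambda>x. F x $ j) \<in> borel_measurable ?M" "integrable ?M (\<lambda>x. (norm (F x $ j))^2)" for j
    using DF unfolding H1_def L2_def by blast+
  have intB: "integrable ?M B"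
    unfolding B_def
  proof (rule Bochner_Integration.integrable_sum[where f="\<lambda>j x. (F x $ j * \<phi> x)^2"])
    fix j :: 2 assume "j \<in> UNIV"
    show "integrable ?M (\<lambda>x. (F x $ j * \<phi> x)^2)"
    proof (rule Bochner_Integration.integrable_bound[OF integrable_mult_right[OF FL2(2)[of j], of Bp]])
      show "(\<lambda>x. (F x $ j * \<phi> x)^2) \<in> borel_measurable ?M"
        by (intro borel_measurable_power borel_measurable_times FL2(1) meas \<phi>cont)
      show "AE x in ?M. norm ((F x $ j * \<phi> x)^2) \<le> norm (Bp * (norm (F x $ j))^2)"
      proof (rule AE_I2)
        fix x
        have "(F x $ j * \<phi> x)^2 = (F x $ j)^2 * (\<phi> x)^2" by (simp add: power_mult_distrib)
        also have "\<dots> \<le> (F x $ j)^2 * Bp" using Bp by (intro mult_left_mono) auto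
        finally show "norm ((F x $ j * \<phi> x)^2) \<le> norm (Bp * (norm (F x $ j))^2)"
          by (simp add: mult.commute)
      qed
    qed
  qed
  define IA where "IA = integral\<^sup>L ?M A"
  define IB where "IB = integral\<^sup>L ?M B"
  define IC where "IC = integral\<^sup>L ?M C"
  define D where "D = integral\<^sup>L ?M (\<lambda>x. (\<phi> x)^2)"
  have IB: "IB \<ge> 0" unfolding IB_def B_def by (intro Bochner_Integration.integral_nonneg sum_nonneg) auto
  have IC: "IC > 0" unfolding IC_def
  proof (rule int_pos[OF O(3) O(1) bO _ _ intC])
    show "0 < r/2" using r by simp
    show "0 < c0 * m0" using c0 m0 by simp
    show "c0 * m0 * indicator (ball q (r/2)) x \<le> C x" for x
    proof (cases "x \<in> ball q (r/2)")
      case True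
      then have "x \<in> cball q r" using r by simp
      then have "c0 < ga x" using cbga by blast
      then have "c0 * m0 \<le> ga x * (\<phi> x)^2" using \<phi>pos[OF True] c0 m0 by (intro mult_mono) auto
      then show ?thesis using True by (simp add: C_def)
    next
      case False
      have "0 \<le> C x"
      proof (cases "x \<in> cball q r")
        case True then show ?thesis using cbga[OF True] c0 by (simp add: C_def)
      next
        case False then show ?thesis by (simp add: C_def \<phi>s)
      qed
      then show ?thesis using False by simp
    qed
  qed
  have ray: "rayleigh \<Omega> F a \<kappa> H \<Phi> G = (IA + (\<kappa>*H)^2 * IB - \<kappa>^2 * IC) / D" for \<kappa> H
  proof -
    have ie: "integral\<^sup>L ?M (\<lambda>x. (\<Sum>j\<in>UNIV. (cmod (G j x - \<i> * complex_of_real (\<kappa> * H * F x $ j) * \<Phi> x))\<^sup>2)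
            - \<kappa>\<^sup>2 * a x * (cmod (\<Phi> x))\<^sup>2) = integral\<^sup>L ?M (\<lambda>x. A x + (\<kappa>*H)^2 * B x - \<kappa>^2 * C x)"
    proof (rule Bochner_Integration.integral_cong[OF refl])
      fix x assume "x \<in> space ?M" then have x: "x \<in> \<Omega>" by simp
      have "(\<Sum>j\<in>UNIV. (cmod (G j x - \<i> * complex_of_real (\<kappa> * H * F x $ j) * \<Phi> x))\<^sup>2)
          = (\<Sum>j\<in>UNIV. (pd \<phi> j x)^2 + (\<kappa>*H)^2 * (F x $ j * \<phi> x)^2)"
        by (intro sum.cong refl) (simp only: G_def \<Phi>_def cm, simp add: power_mult_distrib)
      also have "\<dots> = A x + (\<kappa>*H)^2 * B x" by (simp add: A_def B_def sum.distrib sum_distrib_left)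
      finally have 1: "(\<Sum>j\<in>UNIV. (cmod (G j x - \<i> * complex_of_real (\<kappa> * H * F x $ j) * \<Phi> x))\<^sup>2)
          = A x + (\<kappa>*H)^2 * B x" .
      have 2: "\<kappa>\<^sup>2 * a x * (cmod (\<Phi> x))\<^sup>2 = \<kappa>^2 * C x" using aO[OF x] by (simp add: C_def \<Phi>_def)
      show "(\<Sum>j\<in>UNIV. (cmod (G j x - \<i> * complex_of_real (\<kappa> * H * F x $ j) * \<Phi> x))\<^sup>2)
            - \<kappa>\<^sup>2 * a x * (cmod (\<Phi> x))\<^sup>2 = A x + (\<kappa>*H)^2 * B x - \<kappa>^2 * C x"
        unfolding 1 2 ..
    qed
    have i1: "integrable ?M (\<lambda>x. (\<kappa>*H)^2 * B x)" using intB by simp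
    have i2: "integrable ?M (\<lambda>x. \<kappa>^2 * C x)" using intC by simp
    have i3: "integrable ?M (\<lambda>x. A x + (\<kappa>*H)^2 * B x)" using intA i1 by simp
    have "integral\<^sup>L ?M (\<lambda>x. A x + (\<kappa>*H)^2 * B x - \<kappa>^2 * C x)
        = integral\<^sup>L ?M (\<lambda>x. A x + (\<kappa>*H)^2 * B x) - integral\<^sup>L ?M (\<lambda>x. \<kappa>^2 * C x)"
      by (rule Bochner_Integration.integral_diff[OF i3 i2])
    also have "integral\<^sup>L ?M (\<lambda>x. A x + (\<kappa>*H)^2 * B x) = IA + integral\<^sup>L ?M (\<lambda>x. (\<kappa>*H)^2 * B x)"
      unfolding IA_def by (rule Bochner_Integration.integral_add[OF intA i1])
    finally have "integral\<^sup>L ?M (\<lambda>x. A x + (\<kappa>*H)^2 * B x - \<kappa>^2 * C x) = IA + (\<kappa>*H)^2 * IB - \<kappa>^2 * IC"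
      by (simp add: IB_def IC_def)
    then show ?thesis unfolding rayleigh_def ie Deq D_def by simp
  qed
  have "compact (closure \<Omega>)" using assms(2) by (simp add: compact_closure)
  then have "bounded (ga ` closure \<Omega>)"
    by (intro compact_imp_bounded compact_continuous_image continuous_on_subset[OF gac]) auto
  then obtain Mb where "\<forall>y\<in>ga ` closure \<Omega>. norm y \<le> Mb" unfolding bounded_iff by blast
  then have Mb0: "\<And>x. x \<in> closure \<Omega> \<Longrightarrow> \<bar>ga x\<bar> \<le> Mb" by simp
  have Mb: "\<And>x. x \<in> \<Omega> \<Longrightarrow> a x \<le> max Mb 0"
  proof -
    fix x assume x: "x \<in> \<Omega>"
    then have "\<bar>ga x\<bar> \<le> Mb" using Mb0 closure_subset by blast
    then show "a x \<le> max Mb 0" using aO[OF x] by simp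
  qed
  define S where "S \<kappa> H = {rayleigh \<Omega> F a \<kappa> H \<phi> g | \<phi> g.
       H1 \<Omega> \<phi> g \<and> integral\<^sup>L (lebesgue_on \<Omega>) (\<lambda>x. (cmod (\<phi> x))\<^sup>2) \<noteq> 0}" for \<kappa> H
  have mu: "mu1 \<Omega> F a \<kappa> H = Inf (S \<kappa> H)" for \<kappa> H unfolding mu1_def S_def ..
  have bdd: "bdd_below (S \<kappa> H)" for \<kappa> H
  proof (rule bdd_belowI)
    fix y assume "y \<in> S \<kappa> H"
    then obtain \<phi>' g' where y: "y = rayleigh \<Omega> F a \<kappa> H \<phi>' g'" "H1 \<Omega> \<phi>' g'"
      "integral\<^sup>L (lebesgue_on \<Omega>) (\<lambda>x. (cmod (\<phi>' x))\<^sup>2) \<noteq> 0" unfolding S_def by blast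
    show "-(\<kappa>\<^sup>2 * max Mb 0) \<le> y" unfolding y(1) by (rule rayleigh_lb[OF max.cobounded2 Mb y(2,3)])
  qed
  have mem: "rayleigh \<Omega> F a \<kappa> H \<Phi> G \<in> S \<kappa> H" for \<kappa> H
    unfolding S_def using H1 Dpos Deq by (intro CollectI exI conjI) (rule refl, simp_all)
  have Dp: "D > 0" using Dpos by (simp add: D_def)
  define X where "X = \<bar>IA\<bar> + Cmax^2 * IB"
  have X: "X \<ge> 0" unfolding X_def using IB by simp
  define \<kappa>0 where "\<kappa>0 = sqrt (X / IC) + 1"
  show ?thesis
  proof (intro exI[of _ \<kappa>0] conjI allI impI)
    have "0 \<le> sqrt (X / IC)" using X IC by simp
    then show "\<kappa>0 > 0" unfolding \<kappa>0_def by linarith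
    fix \<kappa> H assume h: "\<kappa>0 \<le> \<kappa> \<and> 0 \<le> H \<and> H \<le> Cmax / \<kappa>"
    have sq: "0 \<le> sqrt (X / IC)" using X IC by simp
    have k: "sqrt (X / IC) < \<kappa>" using h unfolding \<kappa>0_def by linarith
    then have kp: "\<kappa> > 0" using sq by linarith
    have "(sqrt (X / IC))^2 < \<kappa>^2" using k sq by (intro power_strict_mono) auto
    then have "X / IC < \<kappa>^2" using X IC by simp
    then have kX: "X < \<kappa>^2 * IC" using IC by (simp add: pos_divide_less_eq)
    have "H * \<kappa> \<le> Cmax" using h kp by (simp add: pos_le_divide_eq)
    then have "(\<kappa> * H)^2 \<le> Cmax^2" using h kp by (intro power_mono) (auto simp: mult.commute)
    then have "(\<kappa> * H)^2 * IB \<le> Cmax^2 * IB" using IB by (intro mult_right_mono) auto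
    then have N: "IA + (\<kappa>*H)^2 * IB - \<kappa>^2 * IC < 0" using kX unfolding X_def by linarith
    have "rayleigh \<Omega> F a \<kappa> H \<Phi> G < 0" unfolding ray using N Dp by (simp add: divide_neg_pos)
    moreover have "mu1 \<Omega> F a \<kappa> H \<le> rayleigh \<Omega> F a \<kappa> H \<Phi> G"
      unfolding mu by (rule cInf_lower[OF mem bdd])
    ultimately show "mu1 \<Omega> F a \<kappa> H < 0" by linarith
  qed
qed

end
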